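(* For every positive integer $n$: (a) $\mathcal{J}^*_6(2n)$ and $\mathcal{J}_6(2n)$ are even; (b) $\mathcal{J}_6(4n+1)$ is even; (c) $\mathcal{J}^*_6(24n+11)$, $\mathcal{J}^*_6(24n+19)$, $\mathcal{J}_6(24n+11)$ and $\mathcal{J}_6(24n+19)$ are even; (d) $\mathcal{J}^*_6(4n-1)\equiv \mathcal{J}_6(4n-1)\pmod 2$; (e) $\mathcal{J}^*_6(8n+1)\equiv \mathcal{J}_6(24n+3)\pmod 2$.
   Context: Let $q=e^{2\pi i\tau}$, $(a;q)_\infty=\prod_{j\ge0}(1-aq^j)$, and $\eta(\tau)=q^{1/24}(q;q)_\infty$. Define the Hauptmoduln $$j_6(\tau)=\left(\frac{\eta(2\tau)\eta(3\tau)^3}{\eta(\tau)\eta(6\tau)^3}\right)^3-3=\frac1q+\sum_{n\ge0}\mathcal{J}_6(n)q^n,$$ $$j_6^{*}(\tau)=\left(\frac{\eta(\tau)\eta(3\tau)}{\eta(2\tau)\eta(6\tau)}\right)^6+6+2^6\left(\frac{\eta(2\tau)\eta(6\tau)}{\eta(\tau)\eta(3\tau)}\right)^6 = \frac1q+\sum_{n\ge 0}\mathcal{J}^*_6(n)q^n.$$ *)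

theory Defs
  imports "HOL-Computational_Algebra.Formal_Power_Series"
begin

text \<open>The q-Pochhammer symbol (q^k;q^k)_infinity = prod_{j>=1} (1 - q^(k j)) as a formal
  power series in q.  For k >= 1 the coefficient of q^m only depends on the factors
  with j <= m, so it is the m-th coefficient of the finite product over j in {1..m}.\<close>
definition qpoch :: "nat \<Rightarrow> rat fps" where
  "qpoch k = Abs_fps (\<lambda>m. fps_nth (\<Prod>j\<in>{1..m}. (1 - fps_X ^ (k * j))) m)"

text \<open>q * (j_6 + 3) = ( (q^2;q^2)(q^3;q^3)^3 / ((q;q)(q^6;q^6)^3) )^3\<close>
definition j6_series :: "rat fps" where
  "j6_series = (qpoch 2 * qpoch 3 ^ 3 * inverse (qpoch 1 * qpoch 6 ^ 3)) ^ 3"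

text \<open>P = (q;q)(q^3;q^3)/((q^2;q^2)(q^6;q^6));  q * j_6^* = P^6 + 6 q + 64 q^2 P^(-6)\<close>
definition P6 :: "rat fps" where
  "P6 = qpoch 1 * qpoch 3 * inverse (qpoch 2 * qpoch 6)"

definition j6star_series :: "rat fps" where
  "j6star_series = P6 ^ 6 + 6 * fps_X + 64 * fps_X ^ 2 * inverse (P6 ^ 6)"

text \<open>Coefficients: j_6 = 1/q + sum_{n>=0} J6 n q^n, and similarly for j_6^*.\<close>
definition J6 :: "nat \<Rightarrow> rat" where
  "J6 n = fps_nth j6_series (n + 1) - (if n = 0 then 3 else 0)"

definition J6star :: "nat \<Rightarrow> rat" where
  "J6star n = fps_nth j6star_series (n + 1)"

end

theory Submission
  imports Defs "HOL-Library.Z2"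
begin

unbundle fps_syntax
declare add_bit_eq_xor[simp del] mult_bit_eq_and[simp del]



definition qp :: "nat \<Rightarrow> 'a::comm_ring_1 fps" where
  "qp k = Abs_fps (\<lambda>m. (\<Prod>j\<in>{1..m}. (1 - fps_X ^ (k * j))) $ m)"

lemma qpoch_qp: "qpoch k = qp k"
  by (simp add: qpoch_def qp_def)

definition eqm :: "nat \<Rightarrow> 'a::comm_ring_1 fps \<Rightarrow> 'a fps \<Rightarrow> bool" where
  "eqm m f g \<longleftrightarrow> (\<forall>i\<le>m. f $ i = g $ i)"

lemma eqm_refl[simp]: "eqm m f f" by (simp add: eqm_def)
lemma eqm_trans: "eqm m f g \<Longrightarrow> eqm m g h \<Longrightarrow> eqm m f h" by (simp add: eqm_def)

lemma eqm_mult: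
  assumes "eqm m f f'" "eqm m g g'" shows "eqm m (f*g) (f'*g')"
  unfolding eqm_def
proof (intro allI impI)
  fix i assume "i \<le> m"
  then show "(f*g)$i = (f'*g')$i" using assms unfolding fps_mult_nth eqm_def
    by (intro sum.cong) auto
qed

lemma eqm_power: "eqm m f g \<Longrightarrow> eqm m (f^n) (g^n)"
  by (induction n) (auto intro: eqm_mult)

lemma eqm_mult_high:
  assumes "s > m" shows "eqm m (f * (1 - fps_X^s)) f"
  using assms unfolding eqm_def by (auto simp: algebra_simps fps_X_power_mult_right_nth)

lemma prod_trunc:
  assumes "k \<ge> 1" "m \<le> M"
  shows "eqm m (\<Prod>j\<in>{1..M}. (1 - fps_X^(k*j)) :: 'a::comm_ring_1 fps) (\<Prod>j\<in>{1..m}. (1 - fps_X^(k*j)))"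
  using assms(2)
proof (induction M rule: dec_induct)
  case base then show ?case by simp
next
  case (step M)
  have A: "(\<Prod>j\<in>{1..Suc M}. (1 - fps_X^(k*j)) :: 'a fps) = (\<Prod>j\<in>{1..M}. (1 - fps_X^(k*j))) * (1 - fps_X^(k*Suc M))"
    by (simp add: prod.cl_ivl_Suc)
  moreover have B: "eqm m ((\<Prod>j\<in>{1..M}. (1 - fps_X^(k*j)) :: 'a fps) * (1 - fps_X^(k*Suc M))) (\<Prod>j\<in>{1..M}. (1 - fps_X^(k*j)))"
  proof (rule eqm_mult_high)
    have "m < Suc M" using step by simp
    also have "Suc M \<le> k * Suc M" using assms(1) mult_le_mono1[of 1 k "Suc M"] by simp
    finally show "m < k * Suc M" .
  qed
  ultimately show ?case using eqm_trans[OF B step.IH] by simp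
qed

lemma qp_eqm:
  assumes "k \<ge> 1" "m \<le> M"
  shows "eqm m (qp k) (\<Prod>j\<in>{1..M}. (1 - fps_X^(k*j)) :: 'a::comm_ring_1 fps)"
  unfolding eqm_def
proof (intro allI impI)
  fix i assume "i \<le> m"
  have "qp k $ i = (\<Prod>j\<in>{1..i}. (1 - fps_X^(k*j)) :: 'a fps) $ i" by (simp add: qp_def)
  also have "\<dots> = (\<Prod>j\<in>{1..M}. (1 - fps_X^(k*j)) :: 'a fps) $ i"
    using prod_trunc[of k i M, where 'a='a] assms \<open>i\<le>m\<close> by (simp add: eqm_def)
  finally show "qp k $ i = (\<Prod>j\<in>{1..M}. (1 - fps_X^(k*j)) :: 'a fps) $ i" .
qed

lemma qp_nth0[simp]: "qp k $ 0 = 1"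
  by (simp add: qp_def)

section \<open>Reduction mod 2\<close>

definition intfps :: "rat fps \<Rightarrow> bool" where "intfps f \<longleftrightarrow> (\<forall>n. f $ n \<in> \<int>)"
definition red :: "rat fps \<Rightarrow> bit fps" where "red f = Abs_fps (\<lambda>n. of_int \<lfloor>f $ n\<rfloor>)"

lemma floor_Ints: "x \<in> \<int> \<Longrightarrow> of_int \<lfloor>x\<rfloor> = x"
  by (metis Ints_cases floor_of_int)

lemma red_nth: "red f $ n = of_int \<lfloor>f $ n\<rfloor>" by (simp add: red_def)

lemma intfps_mult: "intfps f \<Longrightarrow> intfps g \<Longrightarrow> intfps (f*g)"
  unfolding intfps_def fps_mult_nth by (auto intro!: Ints_sum Ints_mult)

lemma intfps_add: "intfps f \<Longrightarrow> intfps g \<Longrightarrow> intfps (f+g)"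
  unfolding intfps_def by (auto intro!: Ints_add)

lemma intfps_diff: "intfps f \<Longrightarrow> intfps g \<Longrightarrow> intfps (f-g)"
  unfolding intfps_def by (auto intro!: Ints_diff)

lemma intfps_one[simp]: "intfps 1" unfolding intfps_def by (simp add: fps_one_nth)
lemma intfps_Xp[simp]: "intfps (fps_X^s)" unfolding intfps_def by simp
lemma intfps_numeral[simp]: "intfps (numeral k)" unfolding intfps_def numeral_fps_const by simp

lemma intfps_power: "intfps f \<Longrightarrow> intfps (f^n)"
  by (induction n) (auto intro: intfps_mult)

lemma intfps_prod: "(\<And>x. x \<in> A \<Longrightarrow> intfps (f x)) \<Longrightarrow> intfps (\<Prod>x\<in>A. f x)"
  by (induction A rule: infinite_finite_induct) (auto intro: intfps_mult)

lemma red_mult: assumes "intfps f" "intfps g" shows "red (f*g) = red f * red g"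
proof (rule fps_ext)
  fix n
  have "(f*g)$n = of_int (\<Sum>i=0..n. \<lfloor>f$i\<rfloor> * \<lfloor>g$(n-i)\<rfloor>)"
    using assms by (simp add: fps_mult_nth intfps_def floor_Ints)
  then have "\<lfloor>(f*g)$n\<rfloor> = (\<Sum>i=0..n. \<lfloor>f$i\<rfloor> * \<lfloor>g$(n-i)\<rfloor>)" by (simp only: floor_of_int)
  then show "red (f*g) $ n = (red f * red g) $ n" by (simp add: red_nth fps_mult_nth)
qed

lemma red_add: assumes "intfps f" "intfps g" shows "red (f+g) = red f + red g"
proof (rule fps_ext)
  fix n
  have "(f+g)$n = of_int (\<lfloor>f$n\<rfloor> + \<lfloor>g$n\<rfloor>)"
    using assms by (simp add: intfps_def floor_Ints)
  then have "\<lfloor>(f+g)$n\<rfloor> = \<lfloor>f$n\<rfloor> + \<lfloor>g$n\<rfloor>" by simp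
  then show "red (f+g) $ n = (red f + red g) $ n" by (simp add: red_nth)
qed

lemma red_diff: assumes "intfps f" "intfps g" shows "red (f-g) = red f - red g"
proof (rule fps_ext)
  fix n
  have "(f-g)$n = of_int (\<lfloor>f$n\<rfloor> - \<lfloor>g$n\<rfloor>)"
    using assms by (simp add: intfps_def floor_Ints)
  then have "\<lfloor>(f-g)$n\<rfloor> = \<lfloor>f$n\<rfloor> - \<lfloor>g$n\<rfloor>" by simp
  then show "red (f-g) $ n = (red f - red g) $ n" by (simp add: red_nth)
qed

lemma red_one[simp]: "red 1 = 1"
  by (rule fps_ext) (simp add: red_nth fps_one_nth)

lemma red_Xp[simp]: "red (fps_X^s) = fps_X^s"
  by (rule fps_ext) (simp add: red_nth)

lemma red_numeral[simp]: "red (numeral k) = fps_const (numeral k)"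
  by (rule fps_ext) (simp add: red_nth numeral_fps_const)

lemma red_power: "intfps f \<Longrightarrow> red (f^n) = red f ^ n"
  by (induction n) (auto simp: red_mult intfps_power)

lemma red_prod: "(\<And>x. x \<in> A \<Longrightarrow> intfps (f x)) \<Longrightarrow> red (\<Prod>x\<in>A. f x) = (\<Prod>x\<in>A. red (f x))"
  by (induction A rule: infinite_finite_induct) (auto simp: red_mult intfps_prod)

lemma intfps_inverse:
  assumes "intfps f" "f $ 0 = 1"
  shows "intfps (inverse f)"
proof -
  let ?g = "inverse f"
  have fg: "f * ?g = 1" using assms by (intro inverse_mult_eq_1') simp
  have "?g $ n \<in> \<int>" for n
  proof (induction n rule: less_induct)
    case (less n)
    show ?case
    proof (cases n)
      case 0 then show ?thesis using assms by simp
    next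
      case (Suc m)
      have "0 = (f * ?g) $ n" using fg Suc by (simp add: fps_one_nth)
      also have "\<dots> = (\<Sum>i=0..n. f$i * ?g$(n-i))" by (simp add: fps_mult_nth)
      also have "\<dots> = f$0 * ?g$n + (\<Sum>i=Suc 0..n. f$i * ?g$(n-i))"
        by (simp add: sum.atLeast_Suc_atMost)
      finally have "?g $ n = - (\<Sum>i=Suc 0..n. f$i * ?g$(n-i))" using assms(2)
        by (simp add: eq_neg_iff_add_eq_0 add.commute)
      moreover have "(\<Sum>i=Suc 0..n. f$i * ?g$(n-i)) \<in> \<int>"
      proof (intro Ints_sum Ints_mult)
        fix i assume "i \<in> {Suc 0..n}"
        then show "f $ i \<in> \<int>" "?g $ (n - i) \<in> \<int>" using assms(1) less by (auto simp: intfps_def)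
      qed
      ultimately show ?thesis by simp
    qed
  qed
  then show ?thesis by (simp add: intfps_def)
qed

lemma red_inverse:
  assumes "intfps f" "f $ 0 = 1"
  shows "red (inverse f) = inverse (red f)"
proof -
  have fg: "f * inverse f = 1" using assms by (intro inverse_mult_eq_1') simp
  have "red f * red (inverse f) = red (f * inverse f)"
    by (rule red_mult[OF assms(1) intfps_inverse[OF assms], symmetric])
  also have "\<dots> = 1" by (simp only: fg red_one)
  finally have "inverse (red f) = red (inverse f)" by (rule fps_inverse_unique)
  then show ?thesis by simp
qed

lemma of_int_bit: "(of_int i :: bit) = (if even i then 0 else 1)"
proof (cases "even i")
  case True then obtain j where "i = 2*j" by (rule evenE)
  then show ?thesis by simp
next
  case False then obtain j where "i = 2*j+1" by (rule oddE)
  then show ?thesis by simp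
qed

lemma even_rat_half: "((of_int i / 2 :: rat) \<in> \<int>) \<longleftrightarrow> even i"
proof
  assume "(of_int i / 2 :: rat) \<in> \<int>"
  then obtain j where "(of_int i / 2 :: rat) = of_int j" by (auto elim: Ints_cases)
  then have "(of_int i :: rat) = of_int (2*j)" by simp
  then have "i = 2*j" by (simp only: of_int_eq_iff)
  then show "even i" by simp
next
  assume "even i"
  then obtain j where "i = 2*j" by (rule evenE)
  then show "(of_int i / 2 :: rat) \<in> \<int>" by simp
qed

lemma half_Ints:
  fixes x :: rat
  assumes "x \<in> \<int>" shows "(x/2 \<in> \<int>) \<longleftrightarrow> (of_int \<lfloor>x\<rfloor> :: bit) = 0"
proof -
  obtain i where x: "x = of_int i" using assms by (auto elim: Ints_cases)
  show ?thesis unfolding x floor_of_int of_int_bit even_rat_half by simp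
qed




definition sub :: "nat \<Rightarrow> 'a::comm_ring_1 fps \<Rightarrow> 'a fps" where "sub r f = f oo fps_X^r"

lemma sub_nth:
  assumes "r \<ge> 1" shows "sub r f $ n = (if r dvd n then f $ (n div r) else 0)"
proof -
  have pw: "\<And>i. ((fps_X::'a fps)^r)^i = fps_X^(r*i)" by (simp add: power_mult)
  have e: "sub r f $ n = (\<Sum>i=0..n. f$i * (if n = r*i then 1 else 0))"
    unfolding sub_def fps_compose_nth pw fps_X_power_nth by simp
  show ?thesis
  proof (cases "r dvd n")
    case True
    then obtain q where q: "n = r * q" by auto
    have "(\<Sum>i=0..n. f$i * (if n = r*i then 1 else 0)) = (\<Sum>i=0..n. if i = q then f$i else 0)"
      using assms q by (intro sum.cong) auto
    also have "\<dots> = f $ q" using q assms by (simp add: sum.delta)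
    finally have "sub r f $ n = f $ q" using e by simp
    moreover have "n div r = q" using q assms by simp
    ultimately show ?thesis using True by simp
  next
    case False
    have "(\<Sum>i=0..n. f$i * (if n = r*i then 1 else 0)) = (\<Sum>i=0..n. 0)"
      using False by (intro sum.cong) auto
    then show ?thesis using e False by simp
  qed
qed

lemma Xr0: "r \<ge> 1 \<Longrightarrow> ((fps_X :: 'a::comm_ring_1 fps)^r) $ 0 = 0"
  by simp

lemma sub_mult: "r \<ge> 1 \<Longrightarrow> sub r (f * g) = sub r f * sub r (g :: 'a::idom fps)"
  unfolding sub_def by (rule fps_compose_mult_distrib) simp

lemma sub_add: "sub r (f + g) = sub r f + sub r g"
  unfolding sub_def by (rule fps_compose_add_distrib)

lemma sub_diff: "sub r (f - g) = sub r f - sub r (g :: 'a::comm_ring_1 fps)"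
  unfolding sub_def by (rule fps_compose_sub_distrib)

lemma sub_power: "r \<ge> 1 \<Longrightarrow> sub r (f ^ n) = sub r (f :: 'a::idom fps) ^ n"
  unfolding sub_def by (rule fps_compose_power[symmetric]) simp

lemma sub_one[simp]: "sub r 1 = 1"
  unfolding sub_def by simp

lemma sub_X: "r \<ge> 1 \<Longrightarrow> sub r fps_X = (fps_X :: 'a::comm_ring_1 fps) ^ r"
  unfolding sub_def by (rule fps_X_fps_compose_startby0) simp

lemma sub_Xp: "r \<ge> 1 \<Longrightarrow> sub r (fps_X ^ m) = (fps_X :: 'a::idom fps) ^ (r * m)"
  by (simp add: sub_power sub_X power_mult)

lemma sub_prod: "r \<ge> 1 \<Longrightarrow> sub r (\<Prod>x\<in>A. f x) = (\<Prod>x\<in>A. sub r (f x :: 'a::idom fps))"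
  unfolding sub_def by (rule fps_compose_prod_distrib) simp

lemma sub_inverse:
  assumes "r \<ge> 1" "f $ 0 \<noteq> 0"
  shows "sub r (inverse f) = inverse (sub r (f :: 'a::field fps))"
proof -
  have "sub r f * sub r (inverse f) = sub r (f * inverse f)" using assms by (simp add: sub_mult)
  also have "\<dots> = 1" using assms by (simp add: inverse_mult_eq_1')
  finally have "inverse (sub r f) = sub r (inverse f)" by (rule fps_inverse_unique)
  then show ?thesis by simp
qed

lemma sub_nth0[simp]: "sub r f $ 0 = f $ 0"
  unfolding sub_def by simp

lemma sub_sub:
  assumes "r \<ge> 1" "s \<ge> 1" shows "sub r (sub s f) = sub (r * s) f"
proof (rule fps_ext)
  fix n
  have rs: "r * s \<ge> 1" using assms by simp
  show "sub r (sub s f) $ n = sub (r * s) f $ n"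
  proof (cases "r dvd n")
    case True
    then obtain q where q: "n = r * q" by auto
    then show ?thesis using assms rs by (auto simp: sub_nth)
  next
    case False
    then have "\<not> (r*s) dvd n" using dvd_mult_left by blast
    then show ?thesis using assms rs False by (simp add: sub_nth)
  qed
qed

lemma bit_uminus[simp]: "- (x::bit) = x" by simp
lemma bit_minus[simp]: "(x::bit) - y = x + y"
  by (simp add: diff_conv_add_uminus)
lemma bit_double[simp]: "(x::bit) + x = 0"
  by (metis mult_2 bit_2_eq_0 mult_zero_left)

lemma bfps_uminus[simp]: "- (f::bit fps) = f" by (rule fps_ext) simp
lemma bfps_minus: "(f::bit fps) - g = f + g" by (rule fps_ext) simp
lemma bfps_double[simp]: "(f::bit fps) + f = 0" by (rule fps_ext) (simp only: fps_add_nth bit_double fps_zero_nth)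
lemma bfps_two[simp]: "(2::bit fps) = 0"
  by (simp add: numeral_fps_const)

lemma bfps_sq_add: "((f::bit fps) + g)^2 = f^2 + g^2"
proof -
  have "(f + g)^2 = f^2 + g^2 + 2 * (f * g)" by (simp add: power2_eq_square algebra_simps)
  then show ?thesis by simp
qed

lemma bfps_4_add: "((f::bit fps) + g)^4 = f^4 + g^4"
proof -
  have "(f + g)^4 = ((f+g)^2)^2" by (simp flip: power_mult)
  also have "\<dots> = f^4 + g^4" by (simp add: bfps_sq_add flip: power_mult)
  finally show ?thesis .
qed

lemma qp_sq:
  assumes "k \<ge> 1" shows "(qp k :: bit fps)^2 = qp (2*k)"
proof (rule fps_ext)
  fix m
  let ?P = "\<lambda>k. (\<Prod>j\<in>{1..m}. (1 - fps_X^(k*j)) :: bit fps)"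
  have "eqm m ((qp k)^2) ((?P k)^2)" by (rule eqm_power) (rule qp_eqm[OF assms], simp)
  moreover have "(?P k)^2 = ?P (2*k)"
  proof -
    have "(?P k)^2 = (\<Prod>j\<in>{1..m}. (1 - fps_X^(k*j))^2)" by (simp add: power_mult_distrib prod_power_distrib)
    also have "\<dots> = ?P (2*k)"
    proof (rule prod.cong)
      fix j
      have "((1::bit fps) - fps_X^(k*j))^2 = 1 + (fps_X^(k*j))^2"
        by (simp add: bfps_minus bfps_sq_add)
      also have "\<dots> = 1 - fps_X^(2*k*j)" by (simp add: bfps_minus flip: power_mult)
      finally show "((1::bit fps) - fps_X^(k*j))^2 = 1 - fps_X^(2*k*j)" .
    qed simp
    finally show ?thesis .
  qed
  moreover have "qp (2*k) $ m = ?P (2*k) $ m" by (simp add: qp_def)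
  ultimately show "(qp k)^2 $ m = (qp (2*k)::bit fps) $ m" by (simp add: eqm_def)
qed

lemma sub_qp:
  assumes "r \<ge> 1" "k \<ge> 1" shows "sub r (qp k :: 'a::idom fps) = qp (r*k)"
proof (rule fps_ext)
  fix n
  let ?P = "(\<Prod>j\<in>{1..n}. (1 - fps_X^(k*j)) :: 'a fps)"
  have "sub r ?P = (\<Prod>j\<in>{1..n}. (1 - fps_X^(r*k*j)))"
    using assms by (simp add: sub_prod sub_diff sub_Xp mult.assoc)
  then have "qp (r*k) $ n = sub r ?P $ n" by (simp add: qp_def)
  also have "\<dots> = (if r dvd n then ?P $ (n div r) else 0)" using assms by (simp add: sub_nth)
  also have "\<dots> = (if r dvd n then qp k $ (n div r) else 0)"
    using qp_eqm[OF assms(2), of "n div r" n, where 'a='a] by (simp add: eqm_def div_le_dividend)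
  also have "\<dots> = sub r (qp k) $ n" using assms by (simp add: sub_nth)
  finally show "sub r (qp k :: 'a fps) $ n = qp (r*k) $ n" by simp
qed




definition Th :: "('i \<Rightarrow> nat) \<Rightarrow> 'i set \<Rightarrow> bit fps" where
  "Th f I = Abs_fps (\<lambda>n. of_nat (card {i\<in>I. f i = n}))"

definition ffib :: "('i \<Rightarrow> nat) \<Rightarrow> 'i set \<Rightarrow> bool" where
  "ffib f I \<longleftrightarrow> (\<forall>n. finite {i\<in>I. f i = n})"

lemma Th_nth: "Th f I $ n = of_nat (card {i\<in>I. f i = n})" by (simp add: Th_def)

lemma ffib_finite: "finite I \<Longrightarrow> ffib f I" by (simp add: ffib_def)

lemma Th_union:
  assumes "I \<inter> J = {}" "ffib f I" "ffib f J"
  shows "Th f (I \<union> J) = Th f I + Th f J"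
proof (rule fps_ext)
  fix n
  have "{i\<in>I \<union> J. f i = n} = {i\<in>I. f i = n} \<union> {i\<in>J. f i = n}" by auto
  moreover have "card ({i\<in>I. f i = n} \<union> {i\<in>J. f i = n}) = card {i\<in>I. f i = n} + card {i\<in>J. f i = n}"
    using assms by (intro card_Un_disjoint) (auto simp: ffib_def)
  ultimately show "Th f (I \<union> J) $ n = (Th f I + Th f J) $ n" by (simp add: Th_nth)
qed

lemma Th_single: "Th f {i} = fps_X ^ (f i)"
proof (rule fps_ext)
  fix n
  have "{j\<in>{i}. f j = n} = (if f i = n then {i} else {})" by auto
  then show "Th f {i} $ n = fps_X ^ (f i) $ n" by (simp add: Th_nth)
qed

lemma Th_reindex:
  assumes "bij_betw h J I"
  shows "Th (\<lambda>j. f (h j)) J = Th f I"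
proof (rule fps_ext)
  fix n
  have "bij_betw h {j\<in>J. f (h j) = n} {i\<in>I. f i = n}"
    using assms unfolding bij_betw_def inj_on_def by (auto simp: image_iff)
  then have "card {j\<in>J. f (h j) = n} = card {i\<in>I. f i = n}" by (rule bij_betw_same_card)
  then show "Th (\<lambda>j. f (h j)) J $ n = Th f I $ n" by (simp add: Th_nth)
qed

lemma Th_shift: "fps_X^c * Th f I = Th (\<lambda>i. f i + c) I"
proof (rule fps_ext)
  fix n
  show "(fps_X^c * Th f I) $ n = Th (\<lambda>i. f i + c) I $ n"
  proof (cases "n < c")
    case True
    then have "{i\<in>I. f i + c = n} = {}" by auto
    then show ?thesis using True by (simp add: fps_X_power_mult_nth Th_nth)
  next
    case False
    then have "{i\<in>I. f i + c = n} = {i\<in>I. f i = n - c}" by auto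
    then show ?thesis using False by (simp add: fps_X_power_mult_nth Th_nth)
  qed
qed

lemma Th_sub:
  assumes "r \<ge> 1" shows "sub r (Th f I) = Th (\<lambda>i. r * f i) I"
proof (rule fps_ext)
  fix n
  show "sub r (Th f I) $ n = Th (\<lambda>i. r * f i) I $ n"
  proof (cases "r dvd n")
    case True
    then obtain q where q: "n = r * q" by auto
    then have "{i\<in>I. r * f i = n} = {i\<in>I. f i = q}" using assms by auto
    then show ?thesis using q assms by (simp add: sub_nth Th_nth)
  next
    case False
    then have e: "{i\<in>I. r * f i = n} = {}" by auto
    have "card {i\<in>I. r * f i = n} = 0" by (simp only: e card.empty)
    then show ?thesis using False assms by (simp add: sub_nth Th_nth)
  qed
qed

lemma Th_mult:
  assumes "ffib f I" "ffib g J"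
  shows "Th f I * Th g J = Th (\<lambda>p. f (fst p) + g (snd p)) (I \<times> J)"
proof (rule fps_ext)
  fix n
  let ?A = "\<lambda>a. {i\<in>I. f i = a}" and ?B = "\<lambda>b. {j\<in>J. g j = b}"
  have eq: "{p\<in>I \<times> J. f (fst p) + g (snd p) = n} = (\<Union>a\<in>{0..n}. ?A a \<times> ?B (n - a))" by auto
  have "card (\<Union>a\<in>{0..n}. ?A a \<times> ?B (n - a)) = (\<Sum>a\<in>{0..n}. card (?A a \<times> ?B (n-a)))"
    using assms by (intro card_UN_disjoint) (auto simp: ffib_def)
  also have "\<dots> = (\<Sum>a=0..n. card (?A a) * card (?B (n-a)))" by (simp add: card_cartesian_product)
  finally show "(Th f I * Th g J) $ n = Th (\<lambda>p. f (fst p) + g (snd p)) (I \<times> J) $ n"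
    by (simp add: Th_nth fps_mult_nth eq)
qed

definition pent :: "int \<Rightarrow> nat" where "pent j = nat ((3*j*j - j) div 2)"
definition tri :: "nat \<Rightarrow> nat" where "tri k = k*(k+1) div 2"

lemma pent2: "2 * int (pent j) = 3*j*j - j"
proof -
  have e: "3*j*j - j = j * (3*j - 1)" by (simp add: algebra_simps)
  have ev: "even (3*j*j - j)" unfolding e by (cases "even j") auto
  have nn: "0 \<le> 3*j*j - j" unfolding e
    by (cases "j \<ge> 0") (auto simp: zero_le_mult_iff)
  show ?thesis using ev nn unfolding pent_def by auto
qed

lemma tri2: "2 * tri k = k * (k+1)"
proof -
  have "even (k * (k+1))" by auto
  then show ?thesis unfolding tri_def by auto
qed

lemma tri_Suc: "tri (Suc k) = tri k + Suc k"
proof -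
  have "2 * tri (Suc k) = 2 * (tri k + Suc k)" unfolding mult_2 using tri2[of k] tri2[of "Suc k"]
    by (simp add: algebra_simps)
  then show ?thesis by simp
qed

lemma tri_ge: "k \<le> tri k"
proof -
  have "2 * k \<le> k * (k+1)" by (cases k) auto
  then show ?thesis using tri2[of k] le_square[of k] by linarith
qed

lemma abs_le_sq: "\<bar>j::int\<bar> \<le> j * j"
proof (cases "j = 0")
  case False
  then have "1 \<le> \<bar>j\<bar>" by simp
  then have "\<bar>j\<bar> * 1 \<le> \<bar>j\<bar> * \<bar>j\<bar>" by (intro mult_left_mono) auto
  then show ?thesis by (simp add: abs_mult_self_eq)
qed simp

lemma pent_ge: "nat \<bar>j\<bar> \<le> pent j"
proof -
  have "2 * \<bar>j\<bar> \<le> 2 * int (pent j)" unfolding pent2 using abs_le_sq[of j] by linarith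
  then show ?thesis by simp
qed

lemma ffib_pent: "ffib pent UNIV"
  unfolding ffib_def
proof
  fix n
  have "{j\<in>UNIV. pent j = n} \<subseteq> {-int n..int n}"
  proof (rule subsetI)
    fix j assume "j \<in> {j\<in>UNIV. pent j = n}"
    then have "nat \<bar>j\<bar> \<le> n" using pent_ge[of j] by simp
    then show "j \<in> {-int n..int n}" by auto
  qed
  then show "finite {j\<in>UNIV. pent j = n}" by (rule finite_subset) simp
qed

lemma ffib_tri: "ffib tri UNIV"
  unfolding ffib_def
proof
  fix n
  have "{k\<in>UNIV. tri k = n} \<subseteq> {0..n}" using tri_ge by fastforce
  then show "finite {k\<in>UNIV. tri k = n}" by (rule finite_subset) simp
qed




section \<open>Shanks' identity over GF(2)\<close>

definition SH :: "nat \<Rightarrow> bit fps" where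
  "SH n = (\<Sum>k\<in>{0..n}. fps_X^(n*k + tri k) * (\<Prod>j\<in>{Suc k..n}. (1 + fps_X^j)))"

lemma telescope2:
  "(\<Sum>k\<in>{0..n}. (A k + A (Suc k) :: bit fps)) = A 0 + A (Suc n)"
proof (induction n)
  case 0 then show ?case by simp
next
  case (Suc n)
  have "(\<Sum>k\<in>{0..Suc n}. A k + A (Suc k)) = (A 0 + A (Suc n)) + (A (Suc n) + A (Suc (Suc n)))"
    using Suc by simp
  also have "\<dots> = A 0 + (A (Suc n) + A (Suc n)) + A (Suc (Suc n))" by (simp only: add.assoc)
  also have "\<dots> = A 0 + A (Suc (Suc n))" by simp
  finally show ?case .
qed

lemma SH_step:
  "SH (Suc n) = SH n + fps_X^(n * Suc n + tri (Suc n)) + fps_X^(Suc n * Suc n + tri (Suc n))"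
proof -
  define N where "N = Suc n"
  define P where "P = (\<lambda>k m. (\<Prod>j\<in>{Suc k..m}. (1 + fps_X^j)) :: bit fps)"
  define A where "A = (\<lambda>k. fps_X^(n*k + tri k) * (\<Prod>j\<in>{k..n}. (1 + fps_X^j)) :: bit fps)"
  define L where "L = (\<Sum>k\<in>{0..n}. fps_X^(N*k + tri k) * P k N)"
  have s1: "SH N = L + fps_X^(N*N + tri N)"
    unfolding SH_def L_def P_def N_def by (simp add: sum.atLeast0_atMost_Suc)
  have s2: "fps_X^(N*k + tri k) * P k N + fps_X^(n*k + tri k) * P k n = A k + A (Suc k)"
    if "k \<le> n" for k
  proof -
    have p1: "P k N = P k n * (1 + fps_X^N)"
      unfolding P_def N_def using that by (simp add: prod.cl_ivl_Suc)
    have p2: "(\<Prod>j\<in>{k..n}. (1 + fps_X^j) :: bit fps) = (1 + fps_X^k) * P k n"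
      unfolding P_def using that by (simp add: prod.atLeast_Suc_atMost)
    have e1: "N*k + tri k = (n*k + tri k) + k" unfolding N_def by simp
    have e2: "n * Suc k + tri (Suc k) = (n*k + tri k) + (k + N)" unfolding N_def by (simp add: tri_Suc)
    have "A (Suc k) = fps_X^(n * Suc k + tri (Suc k)) * P k n" unfolding A_def P_def by simp
    then have a2: "A (Suc k) = fps_X^(n*k + tri k) * fps_X^k * fps_X^N * P k n"
      unfolding e2 by (simp add: power_add mult.assoc)
    have a1: "A k = fps_X^(n*k + tri k) * ((1 + fps_X^k) * P k n)"
      unfolding A_def p2 by simp
    show ?thesis unfolding p1 e1 a1 a2 power_add by (simp add: algebra_simps)
  qed
  have "L + SH n = (\<Sum>k\<in>{0..n}. fps_X^(N*k + tri k) * P k N + fps_X^(n*k + tri k) * P k n)"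
    unfolding L_def SH_def P_def by (simp add: sum.distrib)
  also have "\<dots> = (\<Sum>k\<in>{0..n}. A k + A (Suc k))" by (intro sum.cong) (simp_all add: s2)
  also have "\<dots> = A 0 + A (Suc n)" by (rule telescope2)
  also have "A 0 = 0"
  proof -
    have "(\<Prod>j\<in>{0..n}. (1 + fps_X^j) :: bit fps) = 0"
      by (rule prod_zero) (auto intro: bexI[of _ 0] simp: one_add_one[symmetric])
    then show ?thesis unfolding A_def by simp
  qed
  also have "A (Suc n) = fps_X^(n * Suc n + tri (Suc n))" unfolding A_def by simp
  finally have "L + SH n = fps_X^(n * Suc n + tri (Suc n))" by simp
  then have "L = SH n + fps_X^(n * Suc n + tri (Suc n))"
    by (metis add.assoc bfps_double add.right_neutral add.commute)
  then show ?thesis using s1 unfolding N_def by simp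
qed

lemma pent_pos: "pent (int (Suc n)) = n * Suc n + tri (Suc n)"
proof -
  define s where "s = int (Suc n)"
  have a: "2 * int (pent s) = 3*s*s - s" by (rule pent2)
  have b: "int (n * Suc n + tri (Suc n)) = (s - 1) * s + int (tri (Suc n))" unfolding s_def by (simp add: algebra_simps)
  have c: "2 * int (tri (Suc n)) = s * (s+1)"
    unfolding s_def using tri2[of "Suc n"] by (metis of_nat_mult of_nat_numeral of_nat_add of_nat_1)
  have c': "2 * int (tri (Suc n)) = s*s + s" using c by (simp add: algebra_simps)
  have b': "int (n * Suc n + tri (Suc n)) = s*s - s + int (tri (Suc n))" using b by (simp add: algebra_simps)
  have "int (pent s) = int (n * Suc n + tri (Suc n))" using a b' c' by linarith
  then show ?thesis unfolding s_def by (simp only: of_nat_eq_iff)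
qed

lemma pent_neg: "pent (- int (Suc n)) = Suc n * Suc n + tri (Suc n)"
proof -
  define s where "s = int (Suc n)"
  have a: "2 * int (pent (-s)) = 3*s*s + s" using pent2[of "-s"] by (simp add: algebra_simps)
  have b: "int (Suc n * Suc n + tri (Suc n)) = s * s + int (tri (Suc n))" unfolding s_def by (simp add: algebra_simps)
  have c: "2 * int (tri (Suc n)) = s * (s+1)"
    unfolding s_def using tri2[of "Suc n"] by (metis of_nat_mult of_nat_numeral of_nat_add of_nat_1)
  have c': "2 * int (tri (Suc n)) = s*s + s" using c by (simp add: algebra_simps)
  have "int (pent (-s)) = int (Suc n * Suc n + tri (Suc n))" using a b c' by linarith
  then show ?thesis unfolding s_def by (simp only: of_nat_eq_iff)
qed

lemma SH_Th: "SH n = Th pent {-int n..int n}"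
proof (induction n)
  case 0
  have "pent 0 = 0" by (simp add: pent_def)
  then show ?case by (simp add: SH_def Th_single tri_def)
next
  case (Suc n)
  have u: "{-int (Suc n)..int (Suc n)} = ({-int n..int n} \<union> {int (Suc n)}) \<union> {- int (Suc n)}" by auto
  have d1: "{-int n..int n} \<inter> {int (Suc n)} = {}" by auto
  have d2: "({-int n..int n} \<union> {int (Suc n)}) \<inter> {-int (Suc n)} = {}" by auto
  have "Th pent {-int (Suc n)..int (Suc n)} = Th pent ({-int n..int n} \<union> {int (Suc n)}) + Th pent {- int (Suc n)}"
    unfolding u by (rule Th_union[OF d2 ffib_finite ffib_finite]) simp_all
  also have "Th pent ({-int n..int n} \<union> {int (Suc n)}) = Th pent {-int n..int n} + Th pent {int (Suc n)}"
    by (rule Th_union[OF d1 ffib_finite ffib_finite]) simp_all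
  finally have e: "Th pent {-int (Suc n)..int (Suc n)} = Th pent {-int n..int n}
      + fps_X^(n * Suc n + tri (Suc n)) + fps_X^(Suc n * Suc n + tri (Suc n))"
    by (simp only: Th_single pent_pos pent_neg)
  show ?case using e by (simp only: SH_step Suc.IH)
qed

lemma qp1_pent: "(qp 1 :: bit fps) = Th pent UNIV"
proof (rule fps_ext)
  fix m
  let ?P = "(\<Prod>j\<in>{1..m}. (1 + fps_X^j)) :: bit fps"
  have "qp 1 $ m = ?P $ m" by (simp add: qp_def bfps_minus)
  also have "\<dots> = SH m $ m"
  proof -
    have "SH m $ m = (\<Sum>k\<in>{0..m}. (fps_X^(m*k + tri k) * (\<Prod>j\<in>{Suc k..m}. (1 + fps_X^j))) $ m)"
      by (simp add: SH_def fps_sum_nth)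
    also have "\<dots> = (fps_X^(m*0 + tri 0) * (\<Prod>j\<in>{Suc 0..m}. (1 + fps_X^j))) $ m
        + (\<Sum>k\<in>{Suc 0..m}. (fps_X^(m*k + tri k) * (\<Prod>j\<in>{Suc k..m}. (1 + fps_X^j))) $ m)"
      by (simp add: sum.atLeast_Suc_atMost)
    also have "(\<Sum>k\<in>{Suc 0..m}. (fps_X^(m*k + tri k) * (\<Prod>j\<in>{Suc k..m}. (1 + fps_X^j)) :: bit fps) $ m) = 0"
    proof (rule sum.neutral, rule ballI)
      fix k assume "k \<in> {Suc 0..m}"
      then have "m < m*k + tri k" using tri_ge[of k] by (cases k) auto
      then show "(fps_X^(m*k + tri k) * (\<Prod>j\<in>{Suc k..m}. (1 + fps_X^j)) :: bit fps) $ m = 0"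
        by (simp add: fps_X_power_mult_nth)
    qed
    finally show ?thesis by (simp add: tri_def)
  qed
  also have "\<dots> = Th pent UNIV $ m"
  proof -
    have "{j\<in>{-int m..int m}. pent j = m} = {j\<in>UNIV. pent j = m}"
    proof (intro set_eqI iffI)
      fix j assume "j \<in> {j\<in>UNIV. pent j = m}"
      then have "nat \<bar>j\<bar> \<le> m" using pent_ge[of j] by simp
      then show "j \<in> {j\<in>{-int m..int m}. pent j = m}" using \<open>j \<in> _\<close> by auto
    qed auto
    then show ?thesis by (simp add: SH_Th Th_nth)
  qed
  finally show "qp 1 $ m = Th pent UNIV $ m" .
qed




section \<open>Parity of involutions\<close>

lemma invol_parity:
  "finite S \<Longrightarrow> (\<forall>x\<in>S. \<iota> x \<in> S \<and> \<iota> (\<iota> x) = x) \<Longrightarrow>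
     (of_nat (card S) :: bit) = of_nat (card {x\<in>S. \<iota> x = x})"
proof (induction "card S" arbitrary: S rule: less_induct)
  case less
  show ?case
  proof (cases "\<exists>x\<in>S. \<iota> x \<noteq> x")
    case False
    then have "{x\<in>S. \<iota> x = x} = S" by auto
    then show ?thesis by simp
  next
    case True
    then obtain x where x: "x \<in> S" "\<iota> x \<noteq> x" by auto
    define S' where "S' = S - {x, \<iota> x}"
    have ixS: "\<iota> x \<in> S" using less.prems x by auto
    have fin: "finite S'" using less.prems by (simp add: S'_def)
    have c2: "card {x, \<iota> x} = 2" using x by simp
    have sub2: "{x, \<iota> x} \<subseteq> S" using x ixS by auto
    have "card S' = card S - 2" unfolding S'_def
      using card_Diff_subset[OF _ sub2] c2 by simp
    moreover have "2 \<le> card S" using card_mono[OF less.prems(1) sub2] c2 by simp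
    ultimately have cardS: "card S = card S' + 2" by simp
    have lt: "card S' < card S" using cardS by simp
    have inv': "\<forall>y\<in>S'. \<iota> y \<in> S' \<and> \<iota> (\<iota> y) = y"
    proof
      fix y assume y: "y \<in> S'"
      then have yS: "y \<in> S" "y \<noteq> x" "y \<noteq> \<iota> x" by (auto simp: S'_def)
      have iy: "\<iota> y \<in> S" "\<iota> (\<iota> y) = y" using less.prems yS by auto
      have "\<iota> y \<noteq> x"
      proof
        assume "\<iota> y = x" then have "\<iota> (\<iota> y) = \<iota> x" by simp
        then show False using iy yS by simp
      qed
      moreover have "\<iota> y \<noteq> \<iota> x"
      proof
        assume "\<iota> y = \<iota> x" then have "\<iota> (\<iota> y) = \<iota> (\<iota> x)" by simp
        then show False using iy yS less.prems x by simp
      qed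
      ultimately show "\<iota> y \<in> S' \<and> \<iota> (\<iota> y) = y" using iy by (simp add: S'_def)
    qed
    have fixp: "{y\<in>S'. \<iota> y = y} = {y\<in>S. \<iota> y = y}"
    proof -
      have "\<iota> (\<iota> x) \<noteq> \<iota> x" using less.prems x by simp
      then show ?thesis using x by (auto simp: S'_def)
    qed
    have "(of_nat (card S') :: bit) = of_nat (card {y\<in>S'. \<iota> y = y})"
      using less.hyps[OF lt fin inv'] .
    then show ?thesis using cardS fixp by simp
  qed
qed

section \<open>The involution on representations by 3a^2+b^2\<close>

definition Sol :: "int \<Rightarrow> (int \<times> int) set" where
  "Sol N = {(a,b). 0 < a \<and> 0 < b \<and> odd a \<and> odd b \<and> 3*a*a + b*b = N}"

definition iota :: "int \<times> int \<Rightarrow> int \<times> int" where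
  "iota p = (let a = fst p; b = snd p in
     if (a+b) mod 4 = 2 then ((a+b) div 2, \<bar>3*a - b\<bar> div 2) else (\<bar>a-b\<bar> div 2, (3*a+b) div 2))"

lemma iota_eval1:
  assumes "(x + y) mod 4 = 2" "x + y = 2*p" "3*x - y = 2*q"
  shows "iota (x,y) = (p, \<bar>q\<bar>)"
  using assms by (simp add: iota_def Let_def abs_mult)

lemma iota_eval2:
  assumes "(x + y) mod 4 \<noteq> 2" "x - y = 2*p" "3*x + y = 2*q"
  shows "iota (x,y) = (\<bar>p\<bar>, q)"
  using assms by (simp add: iota_def Let_def abs_mult)

lemma norm4:
  fixes a b c d :: int
  assumes "4 * (3*c*c + d*d) = 4 * (3*a*a + b*b)"
  shows "3*c*c + \<bar>d\<bar>*\<bar>d\<bar> = 3*a*a + b*b"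
  using assms by (simp add: abs_mult_self_eq)

lemma iota_Sol:
  assumes S: "(a,b) \<in> Sol N" and N3: "N mod 3 = 1"
  shows "iota (a,b) \<in> Sol N \<and> iota (iota (a,b)) = (a,b) \<and> (iota (a,b) = (a,b) \<longleftrightarrow> a = b)"
proof -
  from S have a0: "a > 0" "b > 0" "odd a" "odd b" and nrm: "3*a*a + b*b = N" by (auto simp: Sol_def)
  have b3: "b \<noteq> 3*a"
  proof
    assume "b = 3*a"
    then have "N = 3 * (4*a*a)" using nrm by (simp add: algebra_simps)
    then show False using N3 by simp
  qed
  show ?thesis
  proof (cases "(a+b) mod 4 = 2")
    case True
    have "even (a + b)" using a0 by simp
    then obtain c where c: "a + b = 2*c" by (rule evenE)
    define d where "d = 2*a - c"
    have d: "3*a - b = 2*d" using c unfolding d_def by presburger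
    have i1: "iota (a,b) = (c, \<bar>d\<bar>)" by (rule iota_eval1[OF True c d])
    have cpos: "c > 0" using c a0 by linarith
    have codd: "odd c" using True c by presburger
    have dodd: "odd d" using codd unfolding d_def by presburger
    have d0: "d \<noteq> 0" using b3 c d by linarith
    have "4 * (3*c*c + d*d) = 3*(2*c)*(2*c) + (2*d)*(2*d)" by (simp add: algebra_simps)
    also have "\<dots> = 3*(a+b)*(a+b) + (3*a-b)*(3*a-b)" by (simp only: c d)
    also have "\<dots> = 4*(3*a*a + b*b)" by (simp add: algebra_simps)
    finally have nrm': "3*c*c + \<bar>d\<bar>*\<bar>d\<bar> = N" using nrm norm4 by simp
    have mem: "(c, \<bar>d\<bar>) \<in> Sol N" using cpos codd dodd d0 nrm' by (simp add: Sol_def)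
    have bk: "iota (c, \<bar>d\<bar>) = (a,b)"
    proof (cases "d > 0")
      case True
      have "(c + \<bar>d\<bar>) mod 4 = 2" using True a0 c unfolding d_def by presburger
      moreover have "c + \<bar>d\<bar> = 2*a" using True unfolding d_def by simp
      moreover have "3*c - \<bar>d\<bar> = 2*b" using True c unfolding d_def by simp
      ultimately show ?thesis using iota_eval1 a0 by fastforce
    next
      case False
      then have dn: "\<bar>d\<bar> = -d" by simp
      have "(c + \<bar>d\<bar>) mod 4 \<noteq> 2" unfolding dn unfolding d_def using \<open>(a+b) mod 4 = 2\<close> a0 c by presburger
      moreover have "c - \<bar>d\<bar> = 2*a" unfolding dn unfolding d_def by simp
      moreover have "3*c + \<bar>d\<bar> = 2*b" unfolding dn unfolding d_def using c by simp
      ultimately show ?thesis using iota_eval2 a0 by fastforce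
    qed
    have fixp: "iota (a,b) = (a,b) \<longleftrightarrow> a = b"
    proof
      assume "iota (a,b) = (a,b)" then have "c = a" using i1 by simp
      then show "a = b" using c by simp
    next
      assume "a = b" then have "c = a" "d = a" using c unfolding d_def by auto
      then show "iota (a,b) = (a,b)" using i1 a0 \<open>a = b\<close> by simp
    qed
    show ?thesis using i1 mem bk fixp by simp
  next
    case False
    have "even (a - b)" using a0 by simp
    then obtain u where u: "a - b = 2*u" by (rule evenE)
    define v where "v = 2*a - u"
    have v: "3*a + b = 2*v" using u unfolding v_def by presburger
    have i2: "iota (a,b) = (\<bar>u\<bar>, v)" by (rule iota_eval2[OF False u v])
    have u0: "u \<noteq> 0" using False u a0 by presburger
    have vpos: "v > 0" using v a0 by linarith
    have uodd: "odd u" using False u a0 by presburger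
    have vodd: "odd v" using uodd unfolding v_def by presburger
    have "4 * (3*u*u + v*v) = 3*(2*u)*(2*u) + (2*v)*(2*v)" by (simp add: algebra_simps)
    also have "\<dots> = 3*(a-b)*(a-b) + (3*a+b)*(3*a+b)" by (simp only: u v)
    also have "\<dots> = 4*(3*a*a + b*b)" by (simp add: algebra_simps)
    finally have nrm': "3*\<bar>u\<bar>*\<bar>u\<bar> + v*v = N" using nrm by (simp add: abs_mult_self_eq)
    have mem: "(\<bar>u\<bar>, v) \<in> Sol N" using u0 vpos uodd vodd nrm' by (simp add: Sol_def)
    have bk: "iota (\<bar>u\<bar>, v) = (a,b)"
    proof (cases "u > 0")
      case True
      have "(\<bar>u\<bar> + v) mod 4 = 2" using True a0 unfolding v_def by presburger
      moreover have "\<bar>u\<bar> + v = 2*a" using True unfolding v_def by simp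
      moreover have "3*\<bar>u\<bar> - v = 2*(-b)" using True u unfolding v_def by simp
      ultimately show ?thesis using iota_eval1 a0 by fastforce
    next
      case False
      then have un: "\<bar>u\<bar> = -u" by simp
      have "(\<bar>u\<bar> + v) mod 4 \<noteq> 2" unfolding un v_def using \<open>\<not> (a+b) mod 4 = 2\<close> a0 u by presburger
      moreover have "\<bar>u\<bar> - v = 2*(-a)" unfolding un v_def by simp
      moreover have "3*\<bar>u\<bar> + v = 2*b" unfolding un v_def using u by simp
      ultimately show ?thesis using iota_eval2 a0 by fastforce
    qed
    have nab: "a \<noteq> b" using False a0 by presburger
    have fixp: "iota (a,b) \<noteq> (a,b)"
    proof
      assume "iota (a,b) = (a,b)" then have "v = b" using i2 by simp
      then show False using b3 u v by linarith
    qed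
    show ?thesis using i2 mem bk fixp nab by simp
  qed
qed




definition psi :: "int \<Rightarrow> int" where "psi j = \<bar>6*j - 1\<bar>"

lemma psi_sq: "psi j * psi j = 24 * int (pent j) + 1"
proof -
  have "psi j * psi j = (6*j - 1)*(6*j - 1)" by (simp add: psi_def abs_mult_self_eq)
  also have "\<dots> = 12 * (3*j*j - j) + 1" by (simp add: algebra_simps)
  also have "\<dots> = 24 * int (pent j) + 1" by (simp only: pent2[symmetric])
  finally show ?thesis .
qed

lemma psi_inj: assumes "psi j = psi j'" shows "j = j'"
proof -
  have "6*j - 1 = 6*j' - 1 \<or> 6*j - 1 = -(6*j' - 1)" using assms unfolding psi_def abs_eq_iff by simp
  then show ?thesis by presburger
qed

lemma psi_pos: "psi j > 0"
proof -
  have "6*j - 1 \<noteq> 0" by presburger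
  then show ?thesis by (simp add: psi_def)
qed

lemma psi_odd: "odd (psi j)"
proof (cases "6*j - 1 \<ge> 0")
  case True then show ?thesis by (simp add: psi_def)
next
  case False then show ?thesis by (simp add: psi_def)
qed

lemma psi_surj:
  assumes "b > 0" "odd b" "\<not> 3 dvd b" shows "\<exists>j. psi j = b"
proof (cases "b mod 6 = 5")
  case True
  define j where "j = (b+1) div 6"
  have "6*j - 1 = b" using True unfolding j_def by presburger
  then show ?thesis using assms by (intro exI[of _ j]) (simp add: psi_def)
next
  case False
  then have "b mod 6 = 1" using assms by presburger
  define j where "j = (1-b) div 6"
  have "6*j - 1 = -b" using \<open>b mod 6 = 1\<close> unfolding j_def by presburger
  then show ?thesis using assms by (intro exI[of _ j]) (simp add: psi_def)
qed

lemma sq_odd: "(2 * int k + 1) * (2 * int k + 1) = 8 * int (tri k) + 1"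
proof -
  have h: "2 * int (tri k) = int k * (int k + 1)"
    using tri2[of k] by (metis of_nat_mult of_nat_numeral of_nat_add of_nat_1)
  have h': "2 * int (tri k) = int k * int k + int k" using h by (simp add: algebra_simps)
  have "(2*int k + 1)*(2*int k+1) = 4*(int k*int k + int k) + 1" by (simp add: algebra_simps)
  also have "\<dots> = 4*(2 * int (tri k)) + 1" by (simp only: h'[symmetric])
  finally show ?thesis by simp
qed

lemma Sol_finite: "finite (Sol N)"
proof (rule finite_subset)
  show "Sol N \<subseteq> {0..N} \<times> {0..N}"
  proof
    fix x assume "x \<in> Sol N"
    then obtain a b where x: "x = (a,b)" "a > 0" "b > 0" "3*a*a + b*b = N" by (auto simp: Sol_def)
    have "a \<le> a*a" "b \<le> b*b" using abs_le_sq[of a] abs_le_sq[of b] x by auto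
    moreover have "0 \<le> a*a" "0 \<le> b*b" by auto
    ultimately have "a \<le> N" "b \<le> N" using x by linarith+
    then show "x \<in> {0..N} \<times> {0..N}" using x by auto
  qed
qed simp

lemma not3: assumes "3*a*a + b*b = 24 * int n + 4" shows "\<not> 3 dvd (b::int)"
proof
  assume "3 dvd b"
  then obtain t where t: "b = 3*t" by auto
  have "24 * int n + 4 = 3 * (a*a + 3*t*t)" using assms t by (simp add: algebra_simps)
  then have "(24 * int n + 4) mod 3 = 0" by simp
  then show False by presburger
qed

lemma count_F:
  "card {p\<in>(UNIV::int set) \<times> (UNIV::nat set). pent (fst p) + tri (snd p) = n} = card (Sol (24 * int n + 4))"
proof -
  let ?F = "{p\<in>(UNIV::int set) \<times> (UNIV::nat set). pent (fst p) + tri (snd p) = n}"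
  define \<phi> where "\<phi> = (\<lambda>p::int\<times>nat. (2 * int (snd p) + 1, psi (fst p)))"
  have inj: "inj_on \<phi> ?F"
  proof (rule inj_onI)
    fix p q assume "p \<in> ?F" "q \<in> ?F" "\<phi> p = \<phi> q"
    then have "snd p = snd q" "psi (fst p) = psi (fst q)" by (auto simp: \<phi>_def)
    then show "p = q" using psi_inj by (simp add: prod_eq_iff)
  qed
  have img: "\<phi> ` ?F = Sol (24 * int n + 4)"
  proof (intro set_eqI iffI)
    fix x assume "x \<in> \<phi> ` ?F"
    then obtain j k where jk: "x = (2 * int k + 1, psi j)" "pent j + tri k = n" by (auto simp: \<phi>_def)
    have "3 * (2 * int k + 1) * (2 * int k + 1) + psi j * psi j = 3 * ((2 * int k + 1) * (2 * int k + 1)) + psi j * psi j"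
      by simp
    also have "\<dots> = 24 * (int (pent j) + int (tri k)) + 4" unfolding sq_odd psi_sq by simp
    also have "\<dots> = 24 * int n + 4" using jk by (metis of_nat_add)
    finally show "x \<in> Sol (24 * int n + 4)" using jk psi_pos psi_odd by (simp add: Sol_def)
  next
    fix x assume "x \<in> Sol (24 * int n + 4)"
    then obtain a b where x: "x = (a,b)" "a > 0" "b > 0" "odd a" "odd b" "3*a*a + b*b = 24 * int n + 4"
      by (auto simp: Sol_def)
    define k where "k = nat ((a-1) div 2)"
    have "int k = (a-1) div 2" unfolding k_def using x by simp
    then have ka: "2 * int k + 1 = a" using x by presburger
    obtain j where jb: "psi j = b" using psi_surj[of b] x not3[OF x(6)] by auto
    have "24 * (int (pent j) + int (tri k)) + 4 = 3 * ((2 * int k + 1) * (2 * int k + 1)) + psi j * psi j"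
      unfolding sq_odd psi_sq by simp
    also have "\<dots> = 24 * int n + 4" using x(6) ka jb by (simp add: algebra_simps)
    finally have "int (pent j) + int (tri k) = int n" by presburger
    then have "pent j + tri k = n" by (simp only: of_nat_add[symmetric] of_nat_eq_iff)
    then have "(j,k) \<in> ?F" by simp
    moreover have "\<phi> (j,k) = x" using ka jb x by (simp add: \<phi>_def)
    ultimately show "x \<in> \<phi> ` ?F" by (intro image_eqI[of x \<phi> "(j,k)"]) auto
  qed
  have "bij_betw \<phi> ?F (Sol (24 * int n + 4))" using inj img by (simp add: bij_betw_def)
  then show ?thesis by (rule bij_betw_same_card)
qed

lemma count_G:
  "card {j\<in>(UNIV::int set). 4 * pent j = n} = card {x\<in>Sol (24 * int n + 4). iota x = x}"
proof -
  let ?G = "{j\<in>(UNIV::int set). 4 * pent j = n}"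
  let ?N = "24 * int n + 4"
  have N3: "?N mod 3 = 1" by presburger
  define \<phi> where "\<phi> = (\<lambda>j::int. (psi j, psi j))"
  have inj: "inj_on \<phi> ?G"
    by (rule inj_onI) (auto simp: \<phi>_def dest: psi_inj)
  have img: "\<phi> ` ?G = {x\<in>Sol ?N. iota x = x}"
  proof (intro set_eqI iffI)
    fix x assume "x \<in> \<phi> ` ?G"
    then obtain j where j: "x = (psi j, psi j)" "4 * pent j = n" by (auto simp: \<phi>_def)
    have "3 * psi j * psi j + psi j * psi j = 4 * (psi j * psi j)" by (simp add: algebra_simps)
    also have "\<dots> = 4 * (24 * int (pent j) + 1)" by (simp only: psi_sq)
    also have "\<dots> = ?N"
    proof -
      have "int n = 4 * int (pent j)" using j(2) by simp
      then show ?thesis by presburger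
    qed
    finally have mem: "x \<in> Sol ?N" using j psi_pos psi_odd by (simp add: Sol_def)
    then have "iota x = x" using iota_Sol[of "psi j" "psi j" ?N] N3 j by simp
    then show "x \<in> {x\<in>Sol ?N. iota x = x}" using mem by simp
  next
    fix x assume xin: "x \<in> {x\<in>Sol ?N. iota x = x}"
    then obtain a b where x: "x = (a,b)" "a > 0" "b > 0" "odd a" "odd b" "3*a*a + b*b = ?N"
      by (auto simp: Sol_def)
    have "a = b" using iota_Sol[of a b ?N] N3 xin x by (simp add: Sol_def)
    have "3*a*a + a*a = ?N" using x(6) \<open>a = b\<close> by simp
    then have "\<not> 3 dvd a" by (rule not3)
    obtain j where ja: "psi j = a" using psi_surj[of a] x \<open>\<not> 3 dvd a\<close> by auto
    have "4 * (24 * int (pent j) + 1) = 4 * (a * a)" unfolding psi_sq[symmetric] ja by simp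
    also have "\<dots> = ?N" using x(6) \<open>a = b\<close> by (simp add: algebra_simps)
    finally have "4 * int (pent j) = int n" by presburger
    then have "4 * pent j = n" by simp
    moreover have "\<phi> j = x" using ja x \<open>a = b\<close> by (simp add: \<phi>_def)
    ultimately show "x \<in> \<phi> ` ?G" by (intro image_eqI[of x \<phi> j]) auto
  qed
  have "bij_betw \<phi> ?G {x\<in>Sol ?N. iota x = x}" using inj img by (simp add: bij_betw_def)
  then show ?thesis by (rule bij_betw_same_card)
qed

lemma gauss: "(qp 1 :: bit fps) * Th tri UNIV = sub 4 (qp 1)"
proof (rule fps_ext)
  fix n
  have L: "qp 1 * Th tri UNIV = Th (\<lambda>p. pent (fst p) + tri (snd p)) (UNIV \<times> UNIV)"
    unfolding qp1_pent by (rule Th_mult[OF ffib_pent ffib_tri])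
  have R: "sub 4 (qp 1) = Th (\<lambda>j. 4 * pent j) UNIV" unfolding qp1_pent by (rule Th_sub) simp
  let ?N = "24 * int n + 4"
  have N3: "?N mod 3 = 1" by presburger
  have inv: "\<forall>x\<in>Sol ?N. iota x \<in> Sol ?N \<and> iota (iota x) = x"
  proof
    fix x assume "x \<in> Sol ?N"
    moreover obtain a b where "x = (a,b)" by (cases x)
    ultimately show "iota x \<in> Sol ?N \<and> iota (iota x) = x" using iota_Sol[of a b ?N] N3 by simp
  qed
  have "(of_nat (card (Sol ?N)) :: bit) = of_nat (card {x\<in>Sol ?N. iota x = x})"
    by (rule invol_parity[OF Sol_finite inv])
  then show "(qp 1 * Th tri UNIV) $ n = sub 4 (qp 1) $ n" unfolding L R Th_nth count_F count_G by simp
qed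




lemma qp_ne0: "(qp k :: bit fps) \<noteq> 0"
proof
  assume "(qp k :: bit fps) = 0"
  then have "(qp k :: bit fps) $ 0 = 0" by simp
  then show False by simp
qed

lemma jacobi: "Th tri UNIV = (qp 1 :: bit fps)^3"
proof -
  have "qp 1 * Th tri UNIV = (qp 4 :: bit fps)" using gauss sub_qp[of 4 1] by simp
  also have "\<dots> = (qp 1)^4"
  proof -
    have "(qp 1 :: bit fps)^4 = ((qp 1)^2)^2" by (simp flip: power_mult)
    also have "\<dots> = (qp 2)^2" using qp_sq[of 1] by simp
    also have "\<dots> = qp 4" using qp_sq[of 2] by simp
    finally show ?thesis by simp
  qed
  also have "\<dots> = qp 1 * (qp 1)^3" by (simp add: power_Suc[symmetric] del: power_Suc)
  finally show ?thesis using qp_ne0[of 1] by simp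
qed

lemma ffib_sub: "ffib f I \<Longrightarrow> J \<subseteq> I \<Longrightarrow> ffib f J"
  unfolding ffib_def by (auto intro: finite_subset[rotated])

lemma tri_3m1: "tri (3*m+1) = 9 * tri m + 1"
proof -
  have "2 * tri (3*m+1) = (3*m+1) * (3*m+2)" using tri2[of "3*m+1"] by simp
  also have "\<dots> = 9 * (m * (m+1)) + 2" by (simp add: algebra_simps)
  also have "\<dots> = 2 * (9 * tri m + 1)" by (simp only: tri2[symmetric]) simp
  finally show ?thesis by simp
qed

lemma tri_3m1': "tri (Suc (3*m)) = Suc (9 * tri m)"
  using tri_3m1[of m] by simp

definition hA :: "int \<Rightarrow> nat" where "hA j = (if j \<le> 0 then nat (-3*j) else nat (3*j - 1))"

lemma tri_hA: "tri (hA j) = 3 * pent j"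
proof -
  have t: "2 * int (tri k) = int k * (int k + 1)" for k
    using tri2[of k] by (metis of_nat_mult of_nat_numeral of_nat_add of_nat_1)
  have "2 * int (tri (hA j)) = 2 * int (3 * pent j)"
  proof (cases "j \<le> 0")
    case True
    then have "int (hA j) = -3*j" by (simp add: hA_def)
    then have "2 * int (tri (hA j)) = (-3*j) * (-3*j + 1)" using t[of "hA j"] by simp
    also have "\<dots> = 3 * (3*j*j - j)" by (simp add: algebra_simps)
    also have "\<dots> = 2 * int (3 * pent j)" by (subst pent2[symmetric]) simp
    finally show ?thesis .
  next
    case False
    then have "int (hA j) = 3*j - 1" by (simp add: hA_def)
    then have "2 * int (tri (hA j)) = (3*j - 1) * (3*j - 1 + 1)" using t[of "hA j"] by simp
    also have "\<dots> = 3 * (3*j*j - j)" by (simp add: algebra_simps)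
    also have "\<dots> = 2 * int (3 * pent j)" by (subst pent2[symmetric]) simp
    finally show ?thesis .
  qed
  then show ?thesis by simp
qed

lemma bij_hA: "bij_betw hA UNIV {k. k mod 3 \<noteq> 1}"
proof (rule bij_betw_byWitness[where f'="\<lambda>k. if k mod 3 = 0 then - (int k div 3) else (int k + 1) div 3"])
  show "\<forall>j\<in>UNIV. (if hA j mod 3 = 0 then - (int (hA j) div 3) else (int (hA j) + 1) div 3) = j"
  proof
    fix j :: int
    show "(if hA j mod 3 = 0 then - (int (hA j) div 3) else (int (hA j) + 1) div 3) = j"
    proof (cases "j \<le> 0")
      case True
      then have h: "int (hA j) = -3*j" by (simp add: hA_def)
      then have "hA j mod 3 = 0" by presburger
      then show ?thesis using h by simp
    next
      case False
      then have h: "int (hA j) = 3*j - 1" by (simp add: hA_def)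
      then have "hA j mod 3 \<noteq> 0" by presburger
      then show ?thesis using h by simp
    qed
  qed
  show "\<forall>k\<in>{k. k mod 3 \<noteq> 1}. hA (if k mod 3 = 0 then - (int k div 3) else (int k + 1) div 3) = k"
  proof
    fix k :: nat assume "k \<in> {k. k mod 3 \<noteq> 1}"
    then have k: "k mod 3 \<noteq> 1" by simp
    show "hA (if k mod 3 = 0 then - (int k div 3) else (int k + 1) div 3) = k"
    proof (cases "k mod 3 = 0")
      case True
      have "int k = 3 * (int k div 3)" using True by presburger
      then show ?thesis using True by (simp add: hA_def)
    next
      case False
      then have "k mod 3 = 2" using k by presburger
      then have "int k = 3 * ((int k + 1) div 3) - 1" "(int k + 1) div 3 > 0" by presburger+
      then show ?thesis using False by (simp add: hA_def)
    qed
  qed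
  show "hA ` UNIV \<subseteq> {k. k mod 3 \<noteq> 1}"
  proof
    fix x assume "x \<in> hA ` UNIV"
    then obtain j where j: "x = hA j" by auto
    show "x \<in> {k. k mod 3 \<noteq> 1}"
    proof (cases "j \<le> 0")
      case True
      then have "int x = -3*j" using j by (simp add: hA_def)
      then have "x mod 3 \<noteq> 1" by presburger
      then show ?thesis by simp
    next
      case False
      then have "int x = 3*j - 1" using j by (simp add: hA_def)
      then have "x mod 3 \<noteq> 1" by presburger
      then show ?thesis by simp
    qed
  qed
qed simp

lemma bij_B: "bij_betw (\<lambda>m::nat. 3*m+1) UNIV {k. k mod 3 = 1}"
  by (rule bij_betw_byWitness[where f'="\<lambda>k. k div 3"]) (auto, presburger)

lemma T_split: "Th tri UNIV = sub 3 (qp 1) + fps_X * sub 9 (Th tri UNIV)"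
proof -
  have u: "(UNIV::nat set) = {k. k mod 3 \<noteq> 1} \<union> {k. k mod 3 = 1}" by auto
  have e1: "Th tri UNIV = Th tri {k. k mod 3 \<noteq> 1} + Th tri {k. k mod 3 = 1}"
    by (subst u, rule Th_union) (auto simp: ffib_sub[OF ffib_tri subset_UNIV])
  have e2: "Th tri {k. k mod 3 \<noteq> 1} = Th (\<lambda>j. tri (hA j)) UNIV"
    by (rule Th_reindex[symmetric]) (rule bij_hA)
  have e3: "Th (\<lambda>j. tri (hA j)) UNIV = Th (\<lambda>j. 3 * pent j) UNIV" by (simp add: tri_hA)
  have e4: "Th (\<lambda>j. 3 * pent j) UNIV = sub 3 (qp 1)" unfolding qp1_pent by (rule Th_sub[symmetric]) simp
  have e5: "Th tri {k. k mod 3 = 1} = Th (\<lambda>m. tri (3*m+1)) UNIV"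
    by (rule Th_reindex[symmetric]) (rule bij_B)
  have e6: "Th (\<lambda>m. tri (3*m+1)) UNIV = Th (\<lambda>m. 9 * tri m + 1) UNIV" by (simp add: tri_3m1 tri_3m1')
  have e7: "Th (\<lambda>m. 9 * tri m + 1) UNIV = fps_X^1 * Th (\<lambda>m. 9 * tri m) UNIV" by (rule Th_shift[symmetric])
  have e8: "Th (\<lambda>m. 9 * tri m) UNIV = sub 9 (Th tri UNIV)" by (rule Th_sub[symmetric]) simp
  have "Th tri UNIV = sub 3 (qp 1) + fps_X^1 * Th (\<lambda>m. 9 * tri m) UNIV"
    unfolding e1 e2 e3 e4 e5 e6 e7 ..
  then show ?thesis unfolding e8 power_one_right .
qed




lemma qp2: "(qp 2 :: bit fps) = qp 1 ^ 2" using qp_sq[of 1] by simp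
lemma qp4: "(qp 4 :: bit fps) = qp 1 ^ 4"
proof -
  have "(qp 4 :: bit fps) = (qp 2)^2" using qp_sq[of 2] by simp
  also have "\<dots> = ((qp 1)^2)^2" using qp_sq[of 1] by simp
  also have "\<dots> = qp 1 ^ 4" by (simp flip: power_mult)
  finally show ?thesis .
qed
lemma qp6: "(qp 6 :: bit fps) = qp 3 ^ 2" using qp_sq[of 3] by simp
lemma qp12: "(qp 12 :: bit fps) = qp 3 ^ 4"
proof -
  have "(qp 12 :: bit fps) = (qp 6)^2" using qp_sq[of 6] by simp
  also have "\<dots> = ((qp 3)^2)^2" using qp_sq[of 3] by simp
  also have "\<dots> = qp 3 ^ 4" by (simp flip: power_mult)
  finally show ?thesis .
qed

lemma subqp: "r \<ge> 1 \<Longrightarrow> k \<ge> 1 \<Longrightarrow> sub r (qp k :: bit fps) = qp (r*k)"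
  by (rule sub_qp)

lemma II: "(qp 1 :: bit fps)^3 = qp 3 + fps_X * (qp 9)^3"
proof -
  have j: "(qp 1 :: bit fps)^3 = Th tri UNIV" by (rule jacobi[symmetric])
  have s9: "sub 9 (Th tri UNIV) = (qp 9 :: bit fps)^3"
    unfolding jacobi by (simp add: sub_power subqp)
  have s3: "sub 3 (qp 1) = (qp 3 :: bit fps)" by (simp add: subqp)
  have "Th tri UNIV = qp 3 + fps_X * (qp 9)^3" using T_split unfolding s9 s3 .
  then show ?thesis using j by simp
qed

lemma fixpt:
  assumes "(D::bit fps) = fps_X * sub 3 D" shows "D = 0"
proof (rule fps_ext)
  fix n
  show "D $ n = 0 $ n"
  proof (induction n rule: less_induct)
    case (less n)
    have e: "D $ n = (fps_X * sub 3 D) $ n" by (simp only: assms[symmetric])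
    show ?case
    proof (cases n)
      case 0 then show ?thesis using e by simp
    next
      case (Suc m)
      have "D $ n = sub 3 D $ m" using e Suc by simp
      also have "\<dots> = (if 3 dvd m then D $ (m div 3) else 0)" by (simp add: sub_nth)
      also have "\<dots> = 0" using less[of "m div 3"] Suc by auto
      finally show ?thesis by simp
    qed
  qed
qed

lemma bfps_add_eq0: "(x::bit fps) + y = 0 \<Longrightarrow> x = y"
proof -
  assume "x + y = 0"
  then have "x + y + y = y" by simp
  then show "x = y" by (simp add: add.assoc)
qed

lemma I_eq: "((qp 1 * qp 3)^3 :: bit fps) = (qp 1)^12 + fps_X * (qp 3)^12"
proof -
  define a where "a = (qp 1 :: bit fps)"
  define c where "c = (qp 3 :: bit fps)"
  define v where "v = (qp 9 :: bit fps)"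
  define D where "D = (a * c)^3 + a^12 + fps_X * c^12"
  have ii: "a^3 = c + fps_X * v^3" unfolding a_def c_def v_def by (rule II)
  have sa: "sub 3 a = c" unfolding a_def c_def by (simp add: subqp)
  have sc: "sub 3 c = v" unfolding c_def v_def by (simp add: subqp)
  have sD: "sub 3 D = (c * v)^3 + c^12 + fps_X^3 * v^12"
    unfolding D_def by (simp add: sub_add sub_mult sub_power sub_X sa sc)
  have a12: "a^12 = (c + fps_X * v^3)^4"
  proof -
    have "a^12 = (a^3)^4" by (simp flip: power_mult)
    then show ?thesis using ii by simp
  qed
  have a3c3: "(a * c)^3 = (c + fps_X * v^3) * c^3" by (simp add: power_mult_distrib ii)
  have "D - fps_X * sub 3 D = (c + fps_X * v^3) * c^3 + (c + fps_X * v^3)^4 + fps_X * c^12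
      - fps_X * ((c * v)^3 + c^12 + fps_X^3 * v^12)"
    unfolding sD unfolding D_def a12 a3c3 ..
  also have "\<dots> = 2 * (c^4 + 2*c^3*fps_X*v^3 + 3*c^2*fps_X^2*v^6 + 2*c*fps_X^3*v^9)"
    by algebra
  also have "\<dots> = 0" by simp
  finally have "D = fps_X * sub 3 D" by simp
  then have "D = 0" by (rule fixpt)
  then have "(a * c)^3 + (a^12 + fps_X * c^12) = 0" unfolding D_def by (simp add: add.assoc)
  then have "(a * c)^3 = a^12 + fps_X * c^12" by (rule bfps_add_eq0)
  then show ?thesis unfolding a_def c_def .
qed

definition Cc :: "bit fps" where "Cc = qp 1 ^ 3 * inverse (qp 3) ^ 3"
definition Cp :: "bit fps" where "Cp = qp 3 ^ 3 * inverse (qp 1) ^ 3"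

lemma inv_qp: "(qp k :: bit fps) * inverse (qp k) = 1"
  by (rule inverse_mult_eq_1') simp

lemma sub_inv_qp: "r \<ge> 1 \<Longrightarrow> k \<ge> 1 \<Longrightarrow> sub r (inverse (qp k) :: bit fps) = inverse (qp (r*k))"
  by (simp add: sub_inverse subqp)

lemma G_form: "(qp 2 * qp 3 ^ 3 * inverse (qp 1 * qp 6 ^ 3) :: bit fps)^3 = sub 4 Cc + fps_X"
proof -
  define a where "a = (qp 1 :: bit fps)"
  define c where "c = (qp 3 :: bit fps)"
  define ia where "ia = inverse a"
  define ic where "ic = inverse c"
  have aa: "a * ia = 1" unfolding a_def ia_def by (rule inv_qp)
  have cc: "c * ic = 1" unfolding c_def ic_def by (rule inv_qp)
  have L: "(qp 2 * qp 3 ^ 3 * inverse (qp 1 * qp 6 ^ 3) :: bit fps)^3 = (a^2 * c^3 * (ia * (ic^2)^3))^3"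
    unfolding qp2 qp6 a_def c_def ia_def ic_def by (simp add: fps_inverse_mult fps_inverse_power)
  have R: "sub 4 Cc = (a^4)^3 * (ic^4)^3"
    unfolding Cc_def a_def ic_def c_def
    by (simp add: sub_mult sub_power sub_inv_qp subqp qp4 qp12 fps_inverse_power)
  have c12: "c^12 \<noteq> 0" unfolding c_def using qp_ne0[of 3] by simp
  have "(a^2 * c^3 * (ia * (ic^2)^3))^3 * c^12 = (a*c)^3 * (a*ia)^3 * (c*ic)^18" by algebra
  also have "\<dots> = (a*c)^3" using aa cc by simp
  also have "\<dots> = a^12 + fps_X * c^12" unfolding a_def c_def by (rule I_eq)
  also have "\<dots> = a^12 * (c*ic)^12 + fps_X * c^12" using cc by simp
  also have "\<dots> = ((a^4)^3 * (ic^4)^3 + fps_X) * c^12" by algebra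
  finally have "(a^2 * c^3 * (ia * (ic^2)^3))^3 = (a^4)^3 * (ic^4)^3 + fps_X"
    using c12 by (simp only: mult_cancel_right) simp
  then show ?thesis unfolding L R .
qed

lemma S_form: "(qp 1 * qp 3 * inverse (qp 2 * qp 6) :: bit fps)^6 = sub 4 Cc + fps_X^2 * sub 4 Cp"
proof -
  define a where "a = (qp 1 :: bit fps)"
  define c where "c = (qp 3 :: bit fps)"
  define ia where "ia = inverse a"
  define ic where "ic = inverse c"
  have aa: "a * ia = 1" unfolding a_def ia_def by (rule inv_qp)
  have cc: "c * ic = 1" unfolding c_def ic_def by (rule inv_qp)
  have L: "(qp 1 * qp 3 * inverse (qp 2 * qp 6) :: bit fps)^6 = (a * c * (ia^2 * ic^2))^6"
    unfolding qp2 qp6 a_def c_def ia_def ic_def by (simp add: fps_inverse_mult fps_inverse_power)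
  have R1: "sub 4 Cc = (a^4)^3 * (ic^4)^3"
    unfolding Cc_def a_def ic_def c_def
    by (simp add: sub_mult sub_power sub_inv_qp subqp qp4 qp12 fps_inverse_power)
  have R2: "sub 4 Cp = (c^4)^3 * (ia^4)^3"
    unfolding Cp_def a_def ia_def c_def
    by (simp add: sub_mult sub_power sub_inv_qp subqp qp4 qp12 fps_inverse_power)
  have ac12: "(a*c)^12 \<noteq> 0" unfolding a_def c_def using qp_ne0[of 3] qp_ne0[of 1] by simp
  have "(a * c * (ia^2 * ic^2))^6 * (a*c)^12 = ((a*c)^3)^2 * (a*ia)^12 * (c*ic)^12" by algebra
  also have "\<dots> = ((a*c)^3)^2" using aa cc by simp
  also have "\<dots> = (a^12 + fps_X * c^12)^2" unfolding a_def c_def by (simp only: I_eq)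
  also have "\<dots> = (a^12)^2 + (fps_X * c^12)^2" by (rule bfps_sq_add)
  also have "\<dots> = (a^12)^2 * (c*ic)^12 + (fps_X * c^12)^2 * (a*ia)^12" using aa cc by simp
  also have "\<dots> = ((a^4)^3 * (ic^4)^3 + fps_X^2 * ((c^4)^3 * (ia^4)^3)) * (a*c)^12" by algebra
  finally have "(a * c * (ia^2 * ic^2))^6 = (a^4)^3 * (ic^4)^3 + fps_X^2 * ((c^4)^3 * (ia^4)^3)"
    using ac12 by (simp only: mult_cancel_right) simp
  then show ?thesis unfolding L R1 R2 .
qed

lemma C_form: "Cc = sub 6 (inverse (qp 1)) + fps_X * sub 3 Cp"
proof -
  define a where "a = (qp 1 :: bit fps)"
  define c where "c = (qp 3 :: bit fps)"
  define v where "v = (qp 9 :: bit fps)"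
  define ic where "ic = inverse c"
  have cc: "c * ic = 1" unfolding c_def ic_def by (rule inv_qp)
  have L: "Cc = a^3 * ic^3" unfolding Cc_def a_def ic_def c_def ..
  have R1: "sub 6 (inverse (qp 1)) = ic^2"
    unfolding ic_def c_def by (simp add: sub_inv_qp qp6 fps_inverse_power)
  have R2: "sub 3 Cp = v^3 * ic^3"
    unfolding Cp_def v_def ic_def c_def
    by (simp add: sub_mult sub_power sub_inv_qp subqp)
  have c3: "c^3 \<noteq> 0" unfolding c_def using qp_ne0[of 3] by simp
  have ii: "a^3 = c + fps_X * v^3" unfolding a_def c_def v_def by (rule II)
  have "a^3 * ic^3 * c^3 = a^3 * (c*ic)^3" by algebra
  also have "\<dots> = c + fps_X * v^3" using cc ii by simp
  also have "\<dots> = c * (c*ic)^2 + fps_X * v^3 * (c*ic)^3" using cc by simp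
  also have "\<dots> = (ic^2 + fps_X * (v^3 * ic^3)) * c^3" by algebra
  finally have "a^3 * ic^3 = ic^2 + fps_X * (v^3 * ic^3)"
    using c3 by (simp only: mult_cancel_right) simp
  then show ?thesis unfolding L R1 R2 .
qed




lemma nthS: "(sub 4 Cc + fps_X^2 * sub 4 Cp) $ m =
   (if 4 dvd m then Cc $ (m div 4) else 0) + (if m < 2 then 0 else if 4 dvd (m - 2) then Cp $ ((m-2) div 4) else 0)"
  by (simp add: sub_nth fps_X_power_mult_nth)

lemma nthG: "(sub 4 Cc + fps_X) $ m = (if 4 dvd m then Cc $ (m div 4) else 0) + (if m = 1 then 1 else 0)"
  by (simp add: sub_nth)

lemma nthC: "Cc $ m = (if 6 dvd m then inverse (qp 1) $ (m div 6) else 0)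
    + (if m = 0 then 0 else if 3 dvd (m - 1) then Cp $ ((m-1) div 3) else 0)"
  by (subst C_form) (simp add: sub_nth)

lemma bit_facts:
  fixes n :: nat
  assumes "n \<ge> 1"
  defines "S \<equiv> sub 4 Cc + fps_X^2 * sub 4 Cp" and "G \<equiv> sub 4 Cc + fps_X"
  shows "S $ (2*n+1) = 0" "G $ (2*n+1) = 0" "G $ (4*n+2) = 0"
    "S $ (24*n+12) = 0" "S $ (24*n+20) = 0" "G $ (24*n+12) = 0" "G $ (24*n+20) = 0"
    "S $ (4*n) = G $ (4*n)" "S $ (8*n+2) = G $ (24*n+4)"
proof -
  have c3: "Cc $ (6*n+3) = 0"
  proof -
    have "\<not> 6 dvd (6*n+3)" "\<not> 3 dvd (6*n+3-1)" by presburger+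
    then show ?thesis by (simp add: nthC)
  qed
  have c5: "Cc $ (6*n+5) = 0"
  proof -
    have "\<not> 6 dvd (6*n+5)" "\<not> 3 dvd (6*n+5-1)" by presburger+
    then show ?thesis by (simp add: nthC)
  qed
  have c1: "Cc $ (6*n+1) = Cp $ (2*n)"
  proof -
    have "\<not> 6 dvd (6*n+1)" "3 dvd (6*n+1-1)" "(6*n+1-1) div 3 = 2*n" by presburger+
    then show ?thesis by (simp add: nthC)
  qed
  show "S $ (2*n+1) = 0"
  proof -
    have "\<not> 4 dvd (2*n+1)" "\<not> 4 dvd (2*n+1-2)" using assms by presburger+
    then show ?thesis unfolding S_def nthS by simp
  qed
  show "G $ (2*n+1) = 0"
  proof -
    have "\<not> 4 dvd (2*n+1)" "2*n+1 \<noteq> 1" using assms by presburger+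
    then show ?thesis unfolding G_def nthG by simp
  qed
  show "G $ (4*n+2) = 0"
  proof -
    have "\<not> 4 dvd (4*n+2)" "4*n+2 \<noteq> 1" by presburger+
    then show ?thesis unfolding G_def nthG by simp
  qed
  show "S $ (24*n+12) = 0"
  proof -
    have "4 dvd (24*n+12)" "(24*n+12) div 4 = 6*n+3" "\<not> 4 dvd (24*n+12-2)" by presburger+
    then show ?thesis unfolding S_def nthS using c3 by simp
  qed
  show "S $ (24*n+20) = 0"
  proof -
    have "4 dvd (24*n+20)" "(24*n+20) div 4 = 6*n+5" "\<not> 4 dvd (24*n+20-2)" by presburger+
    then show ?thesis unfolding S_def nthS using c5 by simp
  qed
  show "G $ (24*n+12) = 0"
  proof -
    have "4 dvd (24*n+12)" "(24*n+12) div 4 = 6*n+3" "24*n+12 \<noteq> 1" by presburger+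
    then show ?thesis unfolding G_def nthG using c3 by simp
  qed
  show "G $ (24*n+20) = 0"
  proof -
    have "4 dvd (24*n+20)" "(24*n+20) div 4 = 6*n+5" "24*n+20 \<noteq> 1" by presburger+
    then show ?thesis unfolding G_def nthG using c5 by simp
  qed
  show "S $ (4*n) = G $ (4*n)"
  proof -
    have "4 dvd (4*n)" "\<not> 4 dvd (4*n-2)" "4*n \<noteq> 1" "\<not> 4*n < 2" using assms by presburger+
    then show ?thesis unfolding S_def G_def nthS nthG by simp
  qed
  show "S $ (8*n+2) = G $ (24*n+4)"
  proof -
    have "\<not> 4 dvd (8*n+2)" "4 dvd (8*n+2-2)" "(8*n+2-2) div 4 = 2*n" "\<not> 8*n+2 < 2" by presburger+
    moreover have "4 dvd (24*n+4)" "(24*n+4) div 4 = 6*n+1" "24*n+4 \<noteq> 1" by presburger+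
    ultimately show ?thesis unfolding S_def G_def nthS nthG using c1 by simp
  qed
qed

lemma intfps_qp: "intfps (qp k :: rat fps)"
proof -
  have "intfps (\<Prod>j\<in>{1..m}. (1 - fps_X ^ (k * j)) :: rat fps)" for m
    by (intro intfps_prod intfps_diff) simp_all
  then show ?thesis unfolding intfps_def qp_def by simp
qed

lemma red_qp: "red (qp k :: rat fps) = qp k"
proof (rule fps_ext)
  fix m
  let ?P = "(\<Prod>j\<in>{1..m}. (1 - fps_X ^ (k * j)) :: rat fps)"
  have "red ?P = (\<Prod>j\<in>{1..m}. red (1 - fps_X ^ (k * j)))"
    by (rule red_prod) (intro intfps_diff, simp_all)
  also have "\<dots> = (\<Prod>j\<in>{1..m}. (1 - fps_X ^ (k * j)))"
    by (intro prod.cong refl) (simp add: red_diff)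
  finally have e: "red ?P = (\<Prod>j\<in>{1..m}. (1 - fps_X ^ (k * j)))" .
  have "red (qp k) $ m = red ?P $ m" by (simp add: red_nth qp_def)
  also have "\<dots> = qp k $ m" unfolding e by (simp add: qp_def)
  finally show "red (qp k) $ m = qp k $ m" .
qed

lemma red_X: "red fps_X = fps_X"
  using red_Xp[of 1] by simp

lemma intfps_X: "intfps fps_X"
  using intfps_Xp[of 1] by simp

lemma j6_int: "intfps j6_series" and j6_red: "red j6_series = (qp 2 * qp 3 ^ 3 * inverse (qp 1 * qp 6 ^ 3) :: bit fps)^3"
proof -
  let ?A = "qpoch 2 * qpoch 3 ^ 3" and ?B = "qpoch 1 * qpoch 6 ^ 3"
  have iA: "intfps ?A" by (simp add: qpoch_qp intfps_qp intfps_mult intfps_power)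
  have iB: "intfps ?B" by (simp add: qpoch_qp intfps_qp intfps_mult intfps_power)
  have B0: "?B $ 0 = 1" by (simp add: qpoch_qp fps_power_zeroth)
  have iiB: "intfps (inverse ?B)" by (rule intfps_inverse[OF iB B0])
  have iAB: "intfps (?A * inverse ?B)" by (rule intfps_mult[OF iA iiB])
  show "intfps j6_series" unfolding j6_series_def by (rule intfps_power[OF iAB])
  have "red j6_series = (red ?A * red (inverse ?B))^3"
    unfolding j6_series_def red_power[OF iAB] red_mult[OF iA iiB] ..
  also have "\<dots> = (red ?A * inverse (red ?B))^3" unfolding red_inverse[OF iB B0] ..
  also have "\<dots> = (qp 2 * qp 3 ^ 3 * inverse (qp 1 * qp 6 ^ 3))^3"
    by (simp add: qpoch_qp red_mult red_power intfps_qp intfps_power red_qp)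
  finally show "red j6_series = (qp 2 * qp 3 ^ 3 * inverse (qp 1 * qp 6 ^ 3) :: bit fps)^3" .
qed

lemma js_int: "intfps j6star_series" and js_red: "red j6star_series = (qp 1 * qp 3 * inverse (qp 2 * qp 6) :: bit fps)^6"
proof -
  let ?A = "qpoch 1 * qpoch 3" and ?B = "qpoch 2 * qpoch 6"
  have iA: "intfps ?A" by (simp add: qpoch_qp intfps_qp intfps_mult)
  have iB: "intfps ?B" by (simp add: qpoch_qp intfps_qp intfps_mult)
  have B0: "?B $ 0 = 1" by (simp add: qpoch_qp)
  have iiB: "intfps (inverse ?B)" by (rule intfps_inverse[OF iB B0])
  have iP: "intfps P6" unfolding P6_def by (rule intfps_mult[OF iA iiB])
  have P0: "P6 $ 0 = 1" by (simp add: P6_def qpoch_qp)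
  have iP6: "intfps (P6^6)" by (rule intfps_power[OF iP])
  have P60: "(P6^6) $ 0 = 1" by (simp add: fps_power_zeroth P0)
  have iiP6: "intfps (inverse (P6^6))" by (rule intfps_inverse[OF iP6 P60])
  have i6X: "intfps (6 * fps_X)" by (intro intfps_mult) (simp_all add: intfps_X)
  have i64: "intfps (64 * fps_X^2 * inverse (P6^6))" by (intro intfps_mult iiP6) simp_all
  show "intfps j6star_series" unfolding j6star_series_def
    by (intro intfps_add iP6 i6X i64)
  have "red j6star_series = red (P6^6) + red (6 * fps_X) + red (64 * fps_X^2 * inverse (P6^6))"
    unfolding j6star_series_def by (simp add: red_add intfps_add iP6 i6X i64)
  also have "red (6 * fps_X) = 0" by (simp add: red_mult intfps_X red_X)
  also have "red (64 * fps_X^2 * inverse (P6^6)) = 0"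
    by (simp add: red_mult intfps_mult iiP6)
  also have "red (P6^6) = (red ?A * inverse (red ?B))^6"
    unfolding P6_def red_power[OF intfps_mult[OF iA iiB]] red_mult[OF iA iiB] red_inverse[OF iB B0] ..
  also have "(red ?A * inverse (red ?B))^6 = (qp 1 * qp 3 * inverse (qp 2 * qp 6) :: bit fps)^6"
    by (simp add: qpoch_qp red_mult intfps_qp red_qp)
  finally show "red j6star_series = (qp 1 * qp 3 * inverse (qp 2 * qp 6) :: bit fps)^6" by simp
qed

lemma parity_coeff: "intfps f \<Longrightarrow> (f $ m / 2 \<in> \<int>) \<longleftrightarrow> red f $ m = 0"
  by (simp add: half_Ints red_nth intfps_def)

lemma bit_add_eq0: "((x::bit) + y = 0) = (x = y)"
proof
  assume "x + y = 0"
  then have "x + y + y = y" by simp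
  then show "x = y" by (simp add: add.assoc)
next
  assume "x = y" then show "x + y = 0" by simp
qed

lemma parity_diff:
  assumes "intfps f" "intfps g"
  shows "((f $ m - g $ k) / 2 \<in> \<int>) \<longleftrightarrow> red f $ m = red g $ k"
proof -
  obtain X where X: "f $ m = of_int X" using assms(1) unfolding intfps_def by (metis Ints_cases)
  obtain Y where Y: "g $ k = of_int Y" using assms(2) unfolding intfps_def by (metis Ints_cases)
  have "f $ m - g $ k = of_int (X - Y)" using X Y by simp
  then have "((f $ m - g $ k) / 2 \<in> \<int>) \<longleftrightarrow> (of_int (X - Y) :: bit) = 0"
    using half_Ints[of "f $ m - g $ k"] by simp
  also have "\<dots> \<longleftrightarrow> (of_int X :: bit) = of_int Y" by (simp add: bit_add_eq0)
  finally show ?thesis using X Y by (simp add: red_nth)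
qed

theorem theorem1p5:
  fixes n :: nat
  assumes "n \<ge> 1"
  shows "J6star (2*n) / 2 \<in> \<int> \<and> J6 (2*n) / 2 \<in> \<int>
     \<and> J6 (4*n+1) / 2 \<in> \<int>
     \<and> J6star (24*n+11) / 2 \<in> \<int> \<and> J6star (24*n+19) / 2 \<in> \<int>
     \<and> J6 (24*n+11) / 2 \<in> \<int> \<and> J6 (24*n+19) / 2 \<in> \<int>
     \<and> (J6star (4*n-1) - J6 (4*n-1)) / 2 \<in> \<int>
     \<and> (J6star (8*n+1) - J6 (24*n+3)) / 2 \<in> \<int>"
proof -
  have S: "red j6star_series = sub 4 Cc + fps_X^2 * sub 4 Cp" by (simp only: js_red S_form)
  have G: "red j6_series = sub 4 Cc + fps_X" by (simp only: j6_red G_form)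
  note bf = bit_facts[OF assms]
  have n0: "2*n \<noteq> 0" "4*n+1 \<noteq> 0" "24*n+11 \<noteq> 0" "24*n+19 \<noteq> 0" "4*n-1 \<noteq> 0" "24*n+3 \<noteq> 0"
    using assms by auto
  have idx: "2*n+1 = Suc (2*n)" "4*n+2 = Suc (4*n+1)" "24*n+12 = Suc (24*n+11)" "24*n+20 = Suc (24*n+19)"
    "4*n = Suc (4*n-1)" "8*n+2 = Suc (8*n+1)" "24*n+4 = Suc (24*n+3)" using assms by auto
  have J6e: "J6 m = j6_series $ Suc m" if "m \<noteq> 0" for m using that by (simp add: J6_def)
  have Jse: "J6star m = j6star_series $ Suc m" for m by (simp add: J6star_def)
  show ?thesis
    unfolding J6e[OF n0(1)] J6e[OF n0(2)] J6e[OF n0(3)] J6e[OF n0(4)] J6e[OF n0(5)] J6e[OF n0(6)] Jse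
    unfolding parity_coeff[OF j6_int] parity_coeff[OF js_int] parity_diff[OF js_int j6_int]
    unfolding S G idx[symmetric]
    using bf by simp
qed



end
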